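(* There is an absolute constant $c>0$ such that the following holds. Let $v_1,\dots,v_n$ be distinct non-negative integers, $s_1,\dots,s_n\in[0,1)$, and $f(x):=\sum_{i=1}^n e^{2\pi\imath s_i}x^{v_i}$. Then for every $t\in\mathbb{R}$, $$B(s_1+v_1t,\dots,s_n+v_nt)\ \le\ c\Big(1+\sum_{k=1}^n\frac{|f^{(k)}|_m}{k}\Big).$$
   Context: For $r\in\mathbb{R}$, $\{r\}:=r-\lfloor r\rfloor$. The bias is $B(r_1,\dots,r_n):=\sup_{0\le a\le b\le1}\big|\,|\{i:\{r_i\}\in[a,b]\}|-n(b-a)\big|$. For a complex polynomial $g(x)=\sum_i a_ix^i$, $|g|_m:=\max_{|x|=1}|g(x)|$ (maximum over the unit circle), and for a positive integer $k$, the Hadamard power is $g^{(k)}(x):=\sum_i a_i^kx^i$. *)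

theory Defs
  imports "HOL-Analysis.Analysis" "HOL-Computational_Algebra.Polynomial"
begin

definition bias :: "nat \<Rightarrow> (nat \<Rightarrow> real) \<Rightarrow> real" where
  "bias n r = (SUP ab \<in> {(a,b). 0 \<le> a \<and> a \<le> b \<and> b \<le> (1::real)}.
      \<bar>real (card {i. i < n \<and> frac (r i) \<in> {fst ab..snd ab}}) - real n * (snd ab - fst ab)\<bar>)"

definition circ_norm :: "complex poly \<Rightarrow> real" where
  "circ_norm g = (SUP z \<in> sphere (0::complex) 1. cmod (poly g z))"

definition hadamard_pow :: "complex poly \<Rightarrow> nat \<Rightarrow> complex poly" where
  "hadamard_pow g k = Poly (map (\<lambda>i. coeff g i ^ k) [0..<Suc (degree g)])"

end

theory Submission
  imports Defs
begin


lemma psi_piecewise: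
  fixes w :: real and g :: "real \<Rightarrow> real" and Phi :: "real \<Rightarrow> real \<Rightarrow> real"
  assumes ph: "\<And>\<alpha> a b. a \<le> b \<Longrightarrow> ((\<lambda>t. (\<alpha> - t) * g t) has_integral (Phi \<alpha> b - Phi \<alpha> a)) {a..b}"
  defines "c \<equiv> real_of_int \<lfloor>w + 1/2\<rfloor> - w"
  shows "((\<lambda>t. (1/2 - frac (w + t)) * g t) has_integral
     (Phi (c - 1/2) c - Phi (c - 1/2) (-1/2) + (Phi (c + 1/2) (1/2) - Phi (c + 1/2) c))) {-1/2..1/2}"
proof -
  define p where "p = \<lfloor>w + 1/2\<rfloor>"
  have c: "c = real_of_int p - w" by (simp add: c_def p_def)
  have p1: "real_of_int p \<le> w + 1/2" "w + 1/2 < real_of_int p + 1"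
    unfolding p_def by linarith+
  have cb: "-1/2 < c" "c \<le> 1/2" using p1 c by linarith+
  have I1: "((\<lambda>t. (1/2 - frac (w + t)) * g t) has_integral (Phi (c - 1/2) c - Phi (c - 1/2) (-1/2))) {-1/2..c}"
  proof (rule has_integral_spike_finite[of "{c}"])
    show "((\<lambda>t. (c - 1/2 - t) * g t) has_integral (Phi (c - 1/2) c - Phi (c - 1/2) (-1/2))) {-1/2..c}"
      using ph cb by simp
    fix t assume t: "t \<in> {-1/2..c} - {c}"
    have "\<lfloor>w + t\<rfloor> = p - 1" using t c p1 by (intro floor_unique) auto
    then have "frac (w + t) = w + t - (real_of_int p - 1)" by (simp add: frac_def)
    then show "(1/2 - frac (w + t)) * g t = (c - 1/2 - t) * g t" using c by simp
  qed simp
  have I2: "((\<lambda>t. (1/2 - frac (w + t)) * g t) has_integral (Phi (c + 1/2) (1/2) - Phi (c + 1/2) c)) {c..1/2}"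
  proof (rule has_integral_spike_finite[of "{}"])
    show "((\<lambda>t. (c + 1/2 - t) * g t) has_integral (Phi (c + 1/2) (1/2) - Phi (c + 1/2) c)) {c..1/2}"
      using ph cb by simp
    fix t assume t: "t \<in> {c..1/2} - {}"
    have "\<lfloor>w + t\<rfloor> = p" using t c p1 by (intro floor_unique) auto
    then have "frac (w + t) = w + t - real_of_int p" by (simp add: frac_def)
    then show "(1/2 - frac (w + t)) * g t = (c + 1/2 - t) * g t" using c by simp
  qed simp
  show ?thesis using has_integral_combine[OF _ _ I1 I2] cb by simp
qed



lemma ftc_real:
  fixes f f' :: "real \<Rightarrow> real"
  assumes "a \<le> b" "\<And>x. (f has_real_derivative f' x) (at x)"
  shows "(f' has_integral (f b - f a)) {a..b}"
  using assms by (intro fundamental_theorem_of_calculus)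
     (auto intro: has_field_derivative_at_within simp: has_real_derivative_iff_has_vector_derivative[symmetric])

lemma lin_cos_integral:
  fixes \<omega> :: real assumes "\<omega> \<noteq> 0" "a \<le> b"
  shows "((\<lambda>t. (\<alpha> - t) * cos (\<omega> * t)) has_integral
     (((\<alpha> - b) * sin (\<omega> * b) / \<omega> - cos (\<omega> * b) / (\<omega>*\<omega>)) - ((\<alpha> - a) * sin (\<omega> * a) / \<omega> - cos (\<omega> * a) / (\<omega>*\<omega>)))) {a..b}"
proof -
  have "((\<lambda>t. (\<alpha> - t) * sin (\<omega> * t) / \<omega> - cos (\<omega> * t) / (\<omega>*\<omega>)) has_real_derivative (\<alpha> - x) * cos (\<omega> * x)) (at x)" for x
  proof -
    have "((\<lambda>t. (\<alpha> - t) * sin (\<omega> * t) / \<omega> - cos (\<omega> * t) / (\<omega>*\<omega>)) has_real_derivative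
       ((- 1) * sin (\<omega> * x) + (\<alpha> - x) * (cos (\<omega> * x) * \<omega>)) / \<omega> - (- sin (\<omega> * x) * \<omega>) / (\<omega>*\<omega>)) (at x)"
      using assms(1) by (auto intro!: derivative_eq_intros)
    moreover have "((- 1) * sin (\<omega> * x) + (\<alpha> - x) * (cos (\<omega> * x) * \<omega>)) / \<omega> - (- sin (\<omega> * x) * \<omega>) / (\<omega>*\<omega>)
        = (\<alpha> - x) * cos (\<omega> * x)" using assms(1) by (simp add: field_simps power2_eq_square)
    ultimately show ?thesis by simp
  qed
  from ftc_real[OF assms(2) this] show ?thesis by simp
qed

lemma lin_integral:
  fixes \<alpha> a b :: real assumes "a \<le> b"
  shows "((\<lambda>t. (\<alpha> - t) * 1) has_integral ((\<alpha> * b - b^2/2) - (\<alpha> * a - a^2/2))) {a..b}"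
proof -
  have "((\<lambda>t. \<alpha> * t - t^2/2) has_real_derivative (\<alpha> - x) * 1) (at x)" for x
    by (auto intro!: derivative_eq_intros simp: field_simps)
  from ftc_real[OF assms this] show ?thesis by simp
qed

lemma cos_int_integral:
  fixes j :: int assumes "j \<noteq> 0"
  shows "((\<lambda>t. cos (2 * pi * j * t)) has_integral 0) {-1/2..1/2}"
proof -
  have "((\<lambda>t. sin (2 * pi * j * t) / (2 * pi * j)) has_real_derivative cos (2 * pi * j * x)) (at x)" for x
    using assms by (auto intro!: derivative_eq_intros)
  from ftc_real[of "-1/2" "1/2", OF _ this]
  have "((\<lambda>t. cos (2 * pi * j * t)) has_integral (sin (2 * pi * j * (1/2)) / (2 * pi * j) - sin (2 * pi * j * (-1/2)) / (2 * pi * j))) {-1/2..1/2}"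
    by simp
  moreover have "sin (2 * pi * j * (1/2)) = 0" "sin (2 * pi * j * (-1/2)) = 0"
    by (simp_all add: sin_times_pi_eq_0 mult.commute)
  ultimately show ?thesis by simp
qed

lemma psi_integral:
  fixes w :: real shows
  "((\<lambda>t. (1/2 - frac (w + t))) has_integral 0) {-1/2..1/2}"
proof -
  note psi_piecewise[where w=w and g="\<lambda>t::real. 1::real" and Phi = "\<lambda>\<alpha> t. \<alpha> * t - t^2/2", OF lin_integral]
  then show ?thesis by (simp add: field_simps power2_eq_square)
qed

lemma psi_cos_integral:
  fixes j :: int assumes j: "j \<noteq> 0"
  shows "((\<lambda>t. (1/2 - frac (w + t)) * cos (2 * pi * j * t)) has_integral (sin (2 * pi * j * w) / (2 * pi * j))) {-1/2..1/2}"
proof -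
  define \<omega> where "\<omega> = 2 * pi * j"
  have om: "\<omega> \<noteq> 0" using j by (simp add: \<omega>_def)
  define c where "c = real_of_int \<lfloor>w + 1/2\<rfloor> - w"
  define Phi where "Phi = (\<lambda>\<alpha> t. (\<alpha> - t) * sin (\<omega> * t) / \<omega> - cos (\<omega> * t) / (\<omega>*\<omega>))"
  have ph: "\<And>\<alpha> a b. a \<le> b \<Longrightarrow> ((\<lambda>t. (\<alpha> - t) * cos (\<omega> * t)) has_integral (Phi \<alpha> b - Phi \<alpha> a)) {a..b}"
    unfolding Phi_def by (rule lin_cos_integral[OF om])
  have H: "((\<lambda>t. (1/2 - frac (w + t)) * cos (\<omega> * t)) has_integral
     (Phi (c - 1/2) c - Phi (c - 1/2) (-1/2) + (Phi (c + 1/2) (1/2) - Phi (c + 1/2) c))) {-1/2..1/2}"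
    unfolding c_def by (rule psi_piecewise[OF ph])
  have s1: "sin (\<omega> * (1/2)) = 0" "sin (\<omega> * (-1/2)) = 0"
    by (simp_all add: \<omega>_def sin_times_pi_eq_0 mult.commute)
  have c1: "cos (\<omega> * (-1/2)) = cos (\<omega> * (1/2))"
    by (metis cos_minus minus_divide_left mult_minus_right)
  have sc: "sin (\<omega> * c) = - sin (\<omega> * w)"
  proof -
    define n where "n = j * \<lfloor>w + 1/2\<rfloor>"
    have "\<omega> * c = (2 * pi) * real_of_int n - \<omega> * w"
      by (simp add: \<omega>_def c_def n_def algebra_simps)
    also have "sin \<dots> = - sin (\<omega> * w)"
      by (simp add: sin_diff)
    finally show ?thesis .
  qed
  have val: "Phi (c - 1/2) c - Phi (c - 1/2) (-1/2) + (Phi (c + 1/2) (1/2) - Phi (c + 1/2) c) = sin (\<omega> * w) / \<omega>"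
    unfolding Phi_def using s1 c1 sc om by (simp add: field_simps)
  from H[unfolded val] show ?thesis unfolding \<omega>_def .
qed



definition fej :: "nat \<Rightarrow> real \<Rightarrow> real" where
  "fej K t = (1 / real K) * ((\<Sum>m<K. cos (2 * pi * real m * t))\<^sup>2 + (\<Sum>m<K. sin (2 * pi * real m * t))\<^sup>2)"

lemma fej_nonneg: "0 \<le> fej K t"
  unfolding fej_def by simp

lemma fej_expand:
  "fej K t = (1 / real K) * (\<Sum>m<K. \<Sum>m'<K. cos (2 * pi * real_of_int (int m - int m') * t))"
proof -
  have "(\<Sum>m<K. cos (2 * pi * real m * t))\<^sup>2 + (\<Sum>m<K. sin (2 * pi * real m * t))\<^sup>2
     = (\<Sum>m<K. \<Sum>m'<K. cos (2 * pi * real m * t) * cos (2 * pi * real m' * t) + sin (2 * pi * real m * t) * sin (2 * pi * real m' * t))"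
    by (simp add: power2_eq_square sum_product sum.distrib)
  also have "\<dots> = (\<Sum>m<K. \<Sum>m'<K. cos (2 * pi * real_of_int (int m - int m') * t))"
    by (intro sum.cong refl) (simp add: cos_diff[symmetric] algebra_simps)
  finally show ?thesis unfolding fej_def by simp
qed

lemma fej_cont: "continuous_on S (fej K)"
  unfolding fej_def by (intro continuous_intros)

lemma fej_integrable: "fej K integrable_on {a..b}"
  by (rule integrable_continuous_real[OF fej_cont])

lemma cos_int_integral': 
  fixes j :: int
  shows "((\<lambda>t. cos (2 * pi * j * t)) has_integral (if j = 0 then 1 else 0)) {-1/2..1/2}"
proof (cases "j = 0")
  case True
  have "((\<lambda>t. 1::real) has_integral 1) {-1/2..1/2::real}"
    using has_integral_const_real[of "1::real" "-1/2" "1/2"] by simp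
  then show ?thesis using True by simp
next
  case False then show ?thesis using cos_int_integral[of j] by simp
qed

lemma fej_integral:
  assumes K: "K > 0"
  shows "(fej K has_integral 1) {-1/2..1/2}"
proof -
  have "((\<lambda>t. (1 / real K) * (\<Sum>m<K. \<Sum>m'<K. cos (2 * pi * real_of_int (int m - int m') * t))) has_integral
      (1 / real K) * (\<Sum>m<K. \<Sum>m'<K. (if int m - int m' = 0 then 1 else 0))) {-1/2..1/2}"
    by (intro has_integral_mult_right has_integral_sum finite_lessThan cos_int_integral')
  moreover have "(\<Sum>m<K. \<Sum>m'<K. (if int m - int m' = 0 then 1 else 0::real)) = real K"
  proof -
    have "(\<Sum>m'<K. (if int m - int m' = 0 then 1 else 0::real)) = 1" if "m < K" for m
      using that by (simp add: sum.delta)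
    then show ?thesis by simp
  qed
  ultimately show ?thesis using K by (simp add: fej_expand[abs_def])
qed



lemma sin_half_lower:
  fixes x :: real assumes "0 \<le> x" "x \<le> pi/2"
  shows "x/2 \<le> sin x"
proof -
  have "\<bar>sin x - (\<Sum>m<3. sin_coeff m * x ^ m)\<bar> \<le> inverse (fact 3) * \<bar>x\<bar> ^ 3"
    by (rule Maclaurin_sin_bound)
  moreover have "(\<Sum>m<3. sin_coeff m * x ^ m) = x"
    by (simp add: numeral_3_eq_3 sin_coeff_def)
  ultimately have "\<bar>sin x - x\<bar> \<le> x^3/6" using assms by (simp add: fact_numeral)
  then have "x - x^3/6 \<le> sin x" unfolding abs_le_iff by linarith
  moreover have "x^2 \<le> 3"
  proof -
    have "pi \<le> 3.2" using pi_approx(2) by simp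
    then have "x \<le> 1.6" using assms by linarith
    then have "x^2 \<le> 1.6^2" using assms by (intro power_mono) auto
    then show ?thesis by (simp add: power2_eq_square)
  qed
  moreover have "x^3 = x * x^2" by (simp add: power2_eq_square power3_eq_cube)
  ultimately have "x - x * 3 / 6 \<le> sin x"
    using assms mult_left_mono[of "x^2" 3 x] by simp
  then show ?thesis by simp
qed

lemma cmod_cis_minus_one:
  fixes t :: real assumes "\<bar>t\<bar> \<le> 1/2"
  shows "3 * \<bar>t\<bar> \<le> cmod (cis (2 * pi * t) - 1)"
proof -
  have "(cmod (cis (2 * pi * t) - 1))\<^sup>2 = (cos (2 * pi * t) - 1)\<^sup>2 + (sin (2 * pi * t))\<^sup>2"
    by (simp add: cmod_power2)
  also have "\<dots> = 2 - 2 * cos (2 * (pi * t))"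
    by (simp add: power2_eq_square algebra_simps)
  also have "\<dots> = 4 * (sin (pi * t))\<^sup>2"
    by (simp add: cos_double_sin)
  finally have eq: "(cmod (cis (2 * pi * t) - 1))\<^sup>2 = 4 * (sin (pi * \<bar>t\<bar>))\<^sup>2"
    by (cases "t \<ge> 0") (simp_all add: power2_eq_square)
  have "pi * \<bar>t\<bar> / 2 \<le> sin (pi * \<bar>t\<bar>)"
    using assms by (intro sin_half_lower) auto
  then have "(pi * \<bar>t\<bar> / 2)\<^sup>2 \<le> (sin (pi * \<bar>t\<bar>))\<^sup>2"
    by (intro power_mono) auto
  moreover have "(3 * \<bar>t\<bar>)\<^sup>2 \<le> (pi * \<bar>t\<bar>)\<^sup>2"
    using pi_gt3 by (intro power_mono mult_right_mono) auto
  ultimately have "(3 * \<bar>t\<bar>)\<^sup>2 \<le> (cmod (cis (2 * pi * t) - 1))\<^sup>2"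
    unfolding eq by (simp add: power2_eq_square)
  then show ?thesis
    by (rule power2_le_imp_le) simp
qed

lemma fej_bound:
  assumes K: "K > 0" and t: "0 < \<bar>t\<bar>" "\<bar>t\<bar> \<le> 1/2"
  shows "fej K t \<le> 1 / (2 * real K * t^2)"
proof -
  define z where "z = cis (2 * pi * t)"
  have sumz: "(\<Sum>m<K. z ^ m) = (\<Sum>m<K. cis (real m * (2 * pi * t)))"
    unfolding z_def by (rule sum.cong[OF refl], rule Complex.DeMoivre)
  have re: "Re (\<Sum>m<K. z ^ m) = (\<Sum>m<K. cos (2 * pi * real m * t))"
    and im: "Im (\<Sum>m<K. z ^ m) = (\<Sum>m<K. sin (2 * pi * real m * t))"
    unfolding sumz by (simp_all add: Re_sum Im_sum algebra_simps)
  have f: "fej K t = (1 / real K) * (cmod (\<Sum>m<K. z ^ m))\<^sup>2"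
    unfolding fej_def cmod_power2 re im ..
  have lb: "3 * \<bar>t\<bar> \<le> cmod (z - 1)" unfolding z_def by (rule cmod_cis_minus_one[OF t(2)])
  then have z1: "z \<noteq> 1" using t by auto
  have "cmod (z ^ K - 1) \<le> 2"
  proof -
    have "cmod (z ^ K - 1) \<le> cmod (z ^ K) + cmod 1" by (rule norm_triangle_ineq4)
    also have "\<dots> = 2" by (simp add: z_def norm_power)
    finally show ?thesis .
  qed
  then have "cmod (\<Sum>m<K. z ^ m) \<le> 2 / (3 * \<bar>t\<bar>)"
    using geometric_sum[OF z1, of K] lb t
    by (simp add: norm_divide) (rule frac_le, auto)
  then have "(cmod (\<Sum>m<K. z ^ m))\<^sup>2 \<le> (2 / (3 * \<bar>t\<bar>))\<^sup>2"
    by (intro power_mono) auto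
  also have "\<dots> = 4 / (9 * t^2)" by (simp add: power2_eq_square field_simps)
  finally have "fej K t \<le> (1 / real K) * (4 / (9 * t^2))"
    unfolding f using K by (intro mult_left_mono) auto
  also have "\<dots> \<le> 1 / (2 * real K * t^2)"
    using K t by (simp add: field_simps)
  finally show ?thesis .
qed



lemma ftc_real_on:
  fixes f f' :: "real \<Rightarrow> real"
  assumes "a \<le> b" "\<And>x. x \<in> {a..b} \<Longrightarrow> (f has_real_derivative f' x) (at x)"
  shows "(f' has_integral (f b - f a)) {a..b}"
  using assms by (intro fundamental_theorem_of_calculus)
     (auto intro: has_field_derivative_at_within simp: has_real_derivative_iff_has_vector_derivative[symmetric])

lemma inv_sq_integral:
  fixes K :: nat assumes K: "K > 0" and ab: "a \<le> b" "0 < a \<or> b < 0"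
  shows "((\<lambda>t. 1 / (2 * real K * t^2)) has_integral ((- 1 / (2 * real K * b)) - (- 1 / (2 * real K * a)))) {a..b}"
proof (rule ftc_real_on[OF ab(1)])
  fix x assume x: "x \<in> {a..b}"
  then have x0: "x \<noteq> 0" using ab by auto
  have "((\<lambda>t. - 1 / (2 * real K * t)) has_real_derivative (- ( - 1 * (2 * real K)) / (2 * real K * x)^2)) (at x)"
    using x0 K by (auto intro!: derivative_eq_intros simp: power2_eq_square)
  moreover have "(- ( - 1 * (2 * real K)) / (2 * real K * x)^2) = 1 / (2 * real K * x^2)"
    using x0 K by (simp add: field_simps power2_eq_square)
  ultimately show "((\<lambda>t. - 1 / (2 * real K * t)) has_real_derivative 1 / (2 * real K * x^2)) (at x)"
    by simp
qed

lemma fej_tail_right: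
  assumes K: "K > 0" and a: "0 < a" "a \<le> 1/2"
  shows "integral {a..1/2} (fej K) \<le> 1 / (2 * real K * a)"
proof -
  have "integral {a..1/2} (fej K) \<le> (- 1 / (2 * real K * (1/2))) - (- 1 / (2 * real K * a))"
    using a fej_bound[OF K]
    by (intro has_integral_le[OF integrable_integral[OF fej_integrable] inv_sq_integral[OF K]]) auto
  also have "\<dots> \<le> 1 / (2 * real K * a)" using K a by simp
  finally show ?thesis .
qed

lemma fej_tail_left:
  assumes K: "K > 0" and a: "0 < a" "a \<le> 1/2"
  shows "integral {-1/2..-a} (fej K) \<le> 1 / (2 * real K * a)"
proof -
  have "integral {-1/2..-a} (fej K) \<le> (- 1 / (2 * real K * (-a))) - (- 1 / (2 * real K * (-1/2)))"
    using a fej_bound[OF K]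
    by (intro has_integral_le[OF integrable_integral[OF fej_integrable] inv_sq_integral[OF K]]) auto
  also have "\<dots> \<le> 1 / (2 * real K * a)" using K a by simp
  finally show ?thesis .
qed



definition Gk :: "real \<Rightarrow> int \<Rightarrow> real" where
  "Gk w j = (if j = 0 then 0 else sin (2 * pi * j * w) / (2 * pi * j))"

lemma psi_cos_integral':
  fixes j :: int
  shows "((\<lambda>t. (1/2 - frac (w + t)) * cos (2 * pi * j * t)) has_integral Gk w j) {-1/2..1/2}"
proof (cases "j = 0")
  case True then show ?thesis using psi_integral[of w] by (simp add: Gk_def)
next
  case False then show ?thesis using psi_cos_integral[OF False, of w] by (simp add: Gk_def)
qed

lemma psi_fej_integral:
  "((\<lambda>t. (1/2 - frac (w + t)) * fej K t) has_integral
     (1 / real K) * (\<Sum>m<K. \<Sum>m'<K. Gk w (int m - int m'))) {-1/2..1/2}"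
proof -
  have "((\<lambda>t. (1 / real K) * (\<Sum>m<K. \<Sum>m'<K. (1/2 - frac (w + t)) * cos (2 * pi * real_of_int (int m - int m') * t))) has_integral
     (1 / real K) * (\<Sum>m<K. \<Sum>m'<K. Gk w (int m - int m'))) {-1/2..1/2}"
    by (intro has_integral_mult_right has_integral_sum finite_lessThan psi_cos_integral')
  moreover have "(1 / real K) * (\<Sum>m<K. \<Sum>m'<K. (1/2 - frac (w + t)) * cos (2 * pi * real_of_int (int m - int m') * t))
      = (1/2 - frac (w + t)) * fej K t" for t
    unfolding fej_expand by (simp add: sum_distrib_left)
  ultimately show ?thesis by simp
qed

definition Pf :: "(nat \<Rightarrow> real) \<Rightarrow> nat \<Rightarrow> real \<Rightarrow> real" where
  "Pf y N x = (\<Sum>i<N. (1/2 - frac (x - y i)))"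

definition Sk :: "(nat \<Rightarrow> real) \<Rightarrow> nat \<Rightarrow> nat \<Rightarrow> real" where
  "Sk y N k = cmod (\<Sum>i<N. cis (2 * pi * real k * y i))"

lemma Pf_fej_integral:
  "((\<lambda>t. Pf y N (z + t) * fej K t) has_integral
     (\<Sum>i<N. (1 / real K) * (\<Sum>m<K. \<Sum>m'<K. Gk (z - y i) (int m - int m')))) {-1/2..1/2}"
proof -
  have "((\<lambda>t. \<Sum>i<N. (1/2 - frac ((z - y i) + t)) * fej K t) has_integral
     (\<Sum>i<N. (1 / real K) * (\<Sum>m<K. \<Sum>m'<K. Gk (z - y i) (int m - int m')))) {-1/2..1/2}"
    by (intro has_integral_sum finite_lessThan psi_fej_integral)
  moreover have "(\<Sum>i<N. (1/2 - frac ((z - y i) + t)) * fej K t) = Pf y N (z + t) * fej K t" for t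
    unfolding Pf_def sum_distrib_right by (intro sum.cong refl) (simp add: algebra_simps)
  ultimately show ?thesis by simp
qed

lemma sin_sum_bound:
  fixes d :: int
  shows "\<bar>\<Sum>i<N. sin (2 * pi * d * (z - y i))\<bar> \<le> Sk y N (nat \<bar>d\<bar>)"
proof -
  have "(\<Sum>i<N. sin (2 * pi * d * (z - y i))) = Im (cis (2 * pi * d * z) * (\<Sum>i<N. cis (- (2 * pi * d * y i))))"
    by (simp add: sum_distrib_left Im_sum cis_mult algebra_simps)
  also have "\<bar>\<dots>\<bar> \<le> cmod (cis (2 * pi * d * z) * (\<Sum>i<N. cis (- (2 * pi * d * y i))))"
    by (rule abs_Im_le_cmod)
  also have "\<dots> = cmod (\<Sum>i<N. cis (- (2 * pi * d * y i)))"
    by (simp add: norm_mult)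
  also have "\<dots> = Sk y N (nat \<bar>d\<bar>)"
  proof (cases "d \<ge> 0")
    case True
    have "(\<Sum>i<N. cis (- (2 * pi * d * y i))) = cnj (\<Sum>i<N. cis (2 * pi * real (nat \<bar>d\<bar>) * y i))"
      using True by (simp add: cis_cnj)
    then show ?thesis unfolding Sk_def by (simp only: complex_mod_cnj)
  next
    case False
    have "(\<Sum>i<N. cis (- (2 * pi * d * y i))) = (\<Sum>i<N. cis (2 * pi * real (nat \<bar>d\<bar>) * y i))"
      using False by (intro sum.cong refl) simp
    then show ?thesis unfolding Sk_def by simp
  qed
  finally show ?thesis .
qed



lemma sum_inj_le:
  fixes h :: "'b \<Rightarrow> real"
  assumes "finite B" "inj_on f A" "f ` A \<subseteq> B" "\<And>x. 0 \<le> h x"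
  shows "(\<Sum>x\<in>A. h (f x)) \<le> (\<Sum>k\<in>B. h k)"
proof -
  have "(\<Sum>x\<in>A. h (f x)) = (\<Sum>k\<in>f ` A. h k)" using sum.reindex[OF assms(2), of h] by simp
  also have "\<dots> \<le> (\<Sum>k\<in>B. h k)" using assms by (intro sum_mono2) auto
  finally show ?thesis .
qed

lemma pair_dist_bound:
  fixes h :: "nat \<Rightarrow> real"
  assumes h: "\<And>k. 0 \<le> h k" and m: "m < K"
  shows "(\<Sum>m'<K. (if m = m' then 0 else h (nat \<bar>int m - int m'\<bar>))) \<le> 2 * (\<Sum>k\<in>{1..<K}. h k)"
proof -
  have eq: "(if m = m' then 0 else h (nat \<bar>int m - int m'\<bar>)) =
     (if m' < m then h (m - m') else 0) + (if m < m' then h (m' - m) else 0)" for m'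
    by (cases m' m rule: linorder_cases) (auto simp: nat_diff_distrib)
  have A: "(\<Sum>m'<K. (if m' < m then h (m - m') else 0)) \<le> (\<Sum>k\<in>{1..<K}. h k)"
  proof -
    have "(\<Sum>m'<K. (if m' < m then h (m - m') else 0)) = (\<Sum>m'\<in>{m'\<in>{..<K}. m' < m}. h (m - m'))"
      by (rule sum.inter_filter[symmetric]) simp
    also have "\<dots> \<le> (\<Sum>k\<in>{1..<K}. h k)"
      using m h by (intro sum_inj_le) (auto simp: inj_on_def)
    finally show ?thesis .
  qed
  have B: "(\<Sum>m'<K. (if m < m' then h (m' - m) else 0)) \<le> (\<Sum>k\<in>{1..<K}. h k)"
  proof -
    have "(\<Sum>m'<K. (if m < m' then h (m' - m) else 0)) = (\<Sum>m'\<in>{m'\<in>{..<K}. m < m'}. h (m' - m))"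
      by (rule sum.inter_filter[symmetric]) simp
    also have "\<dots> \<le> (\<Sum>k\<in>{1..<K}. h k)"
      using m h by (intro sum_inj_le) (auto simp: inj_on_def)
    finally show ?thesis .
  qed
  show ?thesis unfolding eq sum.distrib using A B by simp
qed

lemma conv_bound:
  assumes K: "K > 0"
  shows "\<bar>\<Sum>i<N. (1 / real K) * (\<Sum>m<K. \<Sum>m'<K. Gk (z - y i) (int m - int m'))\<bar>
     \<le> (\<Sum>k\<in>{1..<K}. Sk y N k / (pi * real k))"
proof -
  define h where "h k = Sk y N k / (2 * pi * real k)" for k
  have h0: "0 \<le> h k" for k by (simp add: h_def Sk_def)
  have G: "\<bar>\<Sum>i<N. Gk (z - y i) d\<bar> \<le> (if d = 0 then 0 else h (nat \<bar>d\<bar>))" for d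
  proof (cases "d = 0")
    case True then show ?thesis by (simp add: Gk_def)
  next
    case False
    have "(\<Sum>i<N. Gk (z - y i) d) = (\<Sum>i<N. sin (2 * pi * d * (z - y i))) / (2 * pi * d)"
      using False by (simp add: Gk_def sum_divide_distrib)
    then have "\<bar>\<Sum>i<N. Gk (z - y i) d\<bar> = \<bar>\<Sum>i<N. sin (2 * pi * d * (z - y i))\<bar> / (2 * pi * \<bar>d\<bar>)"
      by (simp add: abs_mult)
    also have "\<dots> \<le> Sk y N (nat \<bar>d\<bar>) / (2 * pi * \<bar>d\<bar>)"
      using False by (intro divide_right_mono sin_sum_bound) auto
    also have "\<dots> = h (nat \<bar>d\<bar>)" by (simp add: h_def)
    finally show ?thesis using False by simp
  qed
  have "(\<Sum>i<N. (1 / real K) * (\<Sum>m<K. \<Sum>m'<K. Gk (z - y i) (int m - int m')))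
     = (1 / real K) * (\<Sum>m<K. \<Sum>m'<K. \<Sum>i<N. Gk (z - y i) (int m - int m'))"
    by (simp add: sum_distrib_left sum.swap[of _ "{..<N}"])
  also have "\<bar>\<dots>\<bar> \<le> (1 / real K) * (\<Sum>m<K. \<Sum>m'<K. \<bar>\<Sum>i<N. Gk (z - y i) (int m - int m')\<bar>)"
  proof -
    have "\<bar>\<Sum>m<K. \<Sum>m'<K. \<Sum>i<N. Gk (z - y i) (int m - int m')\<bar> \<le> (\<Sum>m<K. \<Sum>m'<K. \<bar>\<Sum>i<N. Gk (z - y i) (int m - int m')\<bar>)"
      by (rule order.trans[OF sum_abs], intro sum_mono sum_abs)
    then show ?thesis by (simp add: abs_mult divide_right_mono)
  qed
  also have "\<dots> \<le> (1 / real K) * (\<Sum>m<K. \<Sum>m'<K. (if m = m' then 0 else h (nat \<bar>int m - int m'\<bar>)))"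
  proof -
    have "\<bar>\<Sum>i<N. Gk (z - y i) (int m - int m')\<bar> \<le> (if m = m' then 0 else h (nat \<bar>int m - int m'\<bar>))" for m m'
      using G[of "int m - int m'"] by (cases "m = m'") auto
    then show ?thesis by (intro mult_left_mono sum_mono) auto
  qed
  also have "\<dots> \<le> (1 / real K) * (\<Sum>m<K. 2 * (\<Sum>k\<in>{1..<K}. h k))"
    using pair_dist_bound[OF h0] by (intro mult_left_mono sum_mono) auto
  also have "\<dots> = 2 * (\<Sum>k\<in>{1..<K}. h k)" using K by simp
  also have "\<dots> = (\<Sum>k\<in>{1..<K}. Sk y N k / (pi * real k))"
    by (simp add: h_def sum_distrib_left)
  finally show ?thesis .
qed



lemma lower_bound_abstract:
  fixes R :: "real \<Rightarrow> real"
  assumes K: "K > 0" and a: "0 < a" "a \<le> 1/2"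
    and int: "((\<lambda>t. R t * fej K t) has_integral I) {-1/2..1/2}"
    and bnd: "\<And>t. t \<in> {-1/2..1/2} \<Longrightarrow> \<bar>R t\<bar> \<le> M"
    and mid: "\<And>t. t \<in> {-a..a} \<Longrightarrow> \<beta> \<le> R t" and b0: "0 \<le> \<beta>"
  shows "\<beta> * (1 - 1 / (real K * a)) - M * (1 / (real K * a)) \<le> I"
proof -
  define f where "f t = R t * fej K t" for t
  have fi: "f integrable_on {-1/2..1/2}" using int unfolding f_def by blast
  have fI: "integral {-1/2..1/2} f = I" using int unfolding f_def by blast
  have sub: "f integrable_on {c..d}" if "-1/2 \<le> c" "d \<le> 1/2" for c d
    using that by (intro integrable_subinterval_real[OF fi]) auto
  have M0: "0 \<le> M" using bnd[of 0] by auto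
  have I3: "I = integral {-1/2..-a} f + integral {-a..a} f + integral {a..1/2} f"
  proof -
    have "(f has_integral (integral {-1/2..-a} f + integral {-a..a} f)) {-1/2..a}"
      by (rule has_integral_combine[where a="-1/2" and c="-a" and b=a]) (use a in \<open>auto intro!: integrable_integral sub\<close>)
    note h1 = this
    have "(f has_integral (integral {-1/2..-a} f + integral {-a..a} f + integral {a..1/2} f)) {-1/2..1/2}"
      by (rule has_integral_combine[where a="-1/2" and c=a and b="1/2", OF _ _ h1]) (use a in \<open>auto intro!: integrable_integral sub\<close>)
    then show ?thesis using fI by (simp add: integral_unique)
  qed
  have Fi: "fej K integrable_on {c..d}" for c d by (rule fej_integrable)
  have F3: "1 = integral {-1/2..-a} (fej K) + integral {-a..a} (fej K) + integral {a..1/2} (fej K)"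
  proof -
    have "(fej K has_integral (integral {-1/2..-a} (fej K) + integral {-a..a} (fej K))) {-1/2..a}"
      by (rule has_integral_combine[where a="-1/2" and c="-a" and b=a]) (use a in \<open>auto intro!: integrable_integral Fi\<close>)
    note h1 = this
    have "(fej K has_integral (integral {-1/2..-a} (fej K) + integral {-a..a} (fej K) + integral {a..1/2} (fej K))) {-1/2..1/2}"
      by (rule has_integral_combine[where a="-1/2" and c=a and b="1/2", OF _ _ h1]) (use a in \<open>auto intro!: integrable_integral Fi\<close>)
    then show ?thesis using fej_integral[OF K] by (simp add: has_integral_unique)
  qed
  have tl: "integral {-1/2..-a} (fej K) \<le> 1 / (2 * real K * a)" by (rule fej_tail_left[OF K a])
  have tr: "integral {a..1/2} (fej K) \<le> 1 / (2 * real K * a)" by (rule fej_tail_right[OF K a])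
  have Lf: "- M * integral {-1/2..-a} (fej K) \<le> integral {-1/2..-a} f"
  proof -
    have "integral {-1/2..-a} (\<lambda>t. - M * fej K t) \<le> integral {-1/2..-a} f"
    proof (rule integral_le)
      show "(\<lambda>t. - M * fej K t) integrable_on {-1/2..-a}" by (intro integrable_on_mult_right Fi)
      show "f integrable_on {-1/2..-a}" using a by (intro sub) auto
      fix t assume t: "t \<in> {-1/2..-a}"
      then have "- M \<le> R t" using bnd[of t] a by auto
      then show "- M * fej K t \<le> f t" unfolding f_def by (intro mult_right_mono fej_nonneg)
    qed
    then show ?thesis by simp
  qed
  have Rf: "- M * integral {a..1/2} (fej K) \<le> integral {a..1/2} f"
  proof -
    have "integral {a..1/2} (\<lambda>t. - M * fej K t) \<le> integral {a..1/2} f"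
    proof (rule integral_le)
      show "(\<lambda>t. - M * fej K t) integrable_on {a..1/2}" by (intro integrable_on_mult_right Fi)
      show "f integrable_on {a..1/2}" using a by (intro sub) auto
      fix t assume t: "t \<in> {a..1/2}"
      then have "- M \<le> R t" using bnd[of t] a by auto
      then show "- M * fej K t \<le> f t" unfolding f_def by (intro mult_right_mono fej_nonneg)
    qed
    then show ?thesis by simp
  qed
  have Mf: "\<beta> * integral {-a..a} (fej K) \<le> integral {-a..a} f"
  proof -
    have "integral {-a..a} (\<lambda>t. \<beta> * fej K t) \<le> integral {-a..a} f"
    proof (rule integral_le)
      show "(\<lambda>t. \<beta> * fej K t) integrable_on {-a..a}" by (intro integrable_on_mult_right Fi)
      show "f integrable_on {-a..a}" using a by (intro sub) auto
      fix t assume t: "t \<in> {-a..a}"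
      then show "\<beta> * fej K t \<le> f t" unfolding f_def using mid[OF t] by (intro mult_right_mono fej_nonneg)
    qed
    then show ?thesis by simp
  qed
  have "\<beta> * (1 - 1 / (real K * a)) \<le> \<beta> * integral {-a..a} (fej K)"
  proof (rule mult_left_mono[OF _ b0])
    have "1 / (2 * real K * a) + 1 / (2 * real K * a) = 1 / (real K * a)" by (simp add: field_simps)
    then show "1 - 1 / (real K * a) \<le> integral {-a..a} (fej K)" using F3 tl tr by linarith
  qed
  moreover have "M * integral {-1/2..-a} (fej K) + M * integral {a..1/2} (fej K) \<le> M * (1 / (real K * a))"
  proof -
    have "M * integral {-1/2..-a} (fej K) + M * integral {a..1/2} (fej K) = M * (integral {-1/2..-a} (fej K) + integral {a..1/2} (fej K))"
      by (simp add: algebra_simps)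
    also have "\<dots> \<le> M * (1 / (2 * real K * a) + 1 / (2 * real K * a))"
      using tl tr M0 by (intro mult_left_mono add_mono) auto
    also have "1 / (2 * real K * a) + 1 / (2 * real K * a) = 1 / (real K * a)" by (simp add: field_simps)
    finally show ?thesis .
  qed
  ultimately show ?thesis using I3 Lf Rf Mf by linarith
qed



lemma frac_add_le: "0 \<le> h \<Longrightarrow> frac (u + h) \<le> frac u + h"
  unfolding frac_def using floor_mono[of u "u + h"] by simp

lemma Pf_lip:
  assumes "0 \<le> h" shows "Pf y N x - real N * h \<le> Pf y N (x + h)"
proof -
  have "Pf y N x - real N * h = (\<Sum>i<N. (1/2 - frac (x - y i) - h))"
    by (simp add: Pf_def sum_subtractf)
  also have "\<dots> \<le> (\<Sum>i<N. (1/2 - frac (x + h - y i)))"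
  proof (rule sum_mono)
    fix i
    have "frac (x - y i + h) \<le> frac (x - y i) + h" by (rule frac_add_le[OF assms])
    then show "1/2 - frac (x - y i) - h \<le> 1/2 - frac (x + h - y i)" by (simp add: algebra_simps)
  qed
  finally show ?thesis by (simp add: Pf_def)
qed

lemma Pf_bound: "\<bar>Pf y N x\<bar> \<le> real N / 2"
proof -
  have "\<bar>Pf y N x\<bar> \<le> (\<Sum>i<N. \<bar>1/2 - frac (x - y i)\<bar>)" unfolding Pf_def by (rule sum_abs)
  also have "\<dots> \<le> (\<Sum>i<N. 1/2)"
  proof (rule sum_mono)
    fix i show "\<bar>1/2 - frac (x - y i)\<bar> \<le> 1/2"
      using frac_lt_1[of "x - y i"] frac_ge_0[of "x - y i"] by linarith
  qed
  finally show ?thesis by simp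
qed

lemma key_step:
  assumes N: "N > 0" and m: "\<bar>Pf y N x0\<bar> = m" "0 < m" and M: "\<And>x. \<bar>Pf y N x\<bar> \<le> M"
  shows "m / 2 - 2 - 4 * M / m \<le> (\<Sum>k\<in>{1..<N}. Sk y N k / (pi * real k))"
proof -
  define S where "S = (\<Sum>k\<in>{1..<N}. Sk y N k / (pi * real k))"
  define a where "a = m / (4 * real N)"
  have a0: "0 < a" using m N by (simp add: a_def)
  have mN: "m \<le> real N / 2" using Pf_bound[of y N x0] m by simp
  have a1: "a \<le> 1/2" using mN N by (simp add: a_def field_simps)
  have Na: "2 * real N * a = m / 2" using N by (simp add: a_def field_simps)
  have T: "1 / (real N * a) = 4 / m" using N m by (simp add: a_def field_simps)
  define I where "I z = (\<Sum>i<N. (1 / real N) * (\<Sum>m<N. \<Sum>m'<N. Gk (z - y i) (int m - int m')))" for z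
  have conv: "((\<lambda>t. Pf y N (z + t) * fej N t) has_integral I z) {-1/2..1/2} \<and> \<bar>I z\<bar> \<le> S" for z
    unfolding S_def I_def
    using Pf_fej_integral[where y=y and N=N and z=z and K=N] conv_bound[OF N, where N=N and z=z and y=y] by blast
  show ?thesis
  proof (cases "Pf y N x0 > 0")
    case True
    then have P0: "Pf y N x0 = m" using m by simp
    have lb: "(m/2) * (1 - 1 / (real N * a)) - M * (1 / (real N * a)) \<le> I (x0 + a)"
    proof (rule lower_bound_abstract[OF N a0 a1])
      show "((\<lambda>t. Pf y N (x0 + a + t) * fej N t) has_integral I (x0 + a)) {-1/2..1/2}"
        using conv[of "x0 + a"] by (simp add: add.assoc)
      show "\<bar>Pf y N (x0 + a + t)\<bar> \<le> M" for t by (rule M)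
      show "0 \<le> m / 2" using m by simp
      fix t assume t: "t \<in> {-a..a}"
      have "Pf y N x0 - real N * (a + t) \<le> Pf y N (x0 + (a + t))"
        using t by (intro Pf_lip) auto
      moreover have "real N * (a + t) \<le> 2 * real N * a" using t mult_left_mono[of t a "real N"] by (simp add: algebra_simps)
      ultimately show "m / 2 \<le> Pf y N (x0 + a + t)" using P0 Na by (simp add: add.assoc)
    qed
    have "\<bar>I (x0 + a)\<bar> \<le> S" using conv[of "x0 + a"] by (rule conjunct2)
    then have IS: "I (x0 + a) \<le> S" by (simp add: abs_le_iff)
    have e: "(m/2)*(1 - 4/m) - M*(4/m) = m/2 - 2 - 4*M/m" using m(2) by (simp add: field_simps)
    have "m/2 - 2 - 4*M/m \<le> S" using lb[unfolded T] IS e by linarith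
    then show ?thesis unfolding S_def .
  next
    case False
    then have P0: "Pf y N x0 = - m" using m by simp
    have lb: "(m/2) * (1 - 1 / (real N * a)) - M * (1 / (real N * a)) \<le> - I (x0 - a)"
    proof (rule lower_bound_abstract[OF N a0 a1])
      show "((\<lambda>t. - Pf y N (x0 - a + t) * fej N t) has_integral - I (x0 - a)) {-1/2..1/2}"
        using has_integral_neg[OF conjunct1[OF conv[of "x0 - a"]]] by simp
      show "\<bar>- Pf y N (x0 - a + t)\<bar> \<le> M" for t using M by simp
      show "0 \<le> m / 2" using m by simp
      fix t assume t: "t \<in> {-a..a}"
      have "Pf y N (x0 - a + t) - real N * (a - t) \<le> Pf y N ((x0 - a + t) + (a - t))"
        using t by (intro Pf_lip) auto
      moreover have "real N * (a - t) \<le> 2 * real N * a" using t mult_left_mono[of "-t" a "real N"] by (simp add: algebra_simps)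
      ultimately show "m / 2 \<le> - Pf y N (x0 - a + t)" using P0 Na by simp
    qed
    have "\<bar>I (x0 - a)\<bar> \<le> S" using conv[of "x0 - a"] by (rule conjunct2)
    then have IS: "- I (x0 - a) \<le> S" by (simp add: abs_le_iff)
    have e: "(m/2)*(1 - 4/m) - M*(4/m) = m/2 - 2 - 4*M/m" using m(2) by (simp add: field_simps)
    have "m/2 - 2 - 4*M/m \<le> S" using lb[unfolded T] IS e by linarith
    then show ?thesis unfolding S_def .
  qed
qed



lemma Pf_sup_bound:
  assumes N: "N > 0"
  shows "\<bar>Pf y N x\<bar> \<le> 4 * (\<Sum>k\<in>{1..<N}. Sk y N k / (pi * real k)) + 40"
proof (rule ccontr)
  define S where "S = (\<Sum>k\<in>{1..<N}. Sk y N k / (pi * real k))"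
  assume "\<not> ?thesis"
  then have x: "4 * S + 40 < \<bar>Pf y N x\<bar>" unfolding S_def by simp
  have S0: "0 \<le> S" unfolding S_def Sk_def by (intro sum_nonneg) auto
  define M where "M = (SUP x. \<bar>Pf y N x\<bar>)"
  have bdd: "bdd_above (range (\<lambda>x. \<bar>Pf y N x\<bar>))"
    using Pf_bound by (intro bdd_aboveI2) blast
  have Mub: "\<bar>Pf y N z\<bar> \<le> M" for z unfolding M_def by (rule cSUP_upper[OF _ bdd]) simp
  have "4 * S + 40 < M" using x Mub[of x] by linarith
  then have M0: "0 < M" using S0 by linarith
  have "M / 2 < M" using M0 by simp
  then have "\<exists>x0\<in>UNIV. M / 2 < \<bar>Pf y N x0\<bar>"
    unfolding M_def by (subst (asm) less_cSUP_iff[OF _ bdd]) auto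
  then obtain x0 where x0: "M / 2 < \<bar>Pf y N x0\<bar>" by blast
  define m where "m = \<bar>Pf y N x0\<bar>"
  have m0: "0 < m" using x0 M0 m_def by linarith
  have ks: "m / 2 - 2 - 4 * M / m \<le> S"
    unfolding S_def by (rule key_step[OF N m_def[symmetric] m0 Mub])
  have "4 * M / m < 8" using x0 m0 by (simp add: m_def field_simps)
  then have "m < 2 * S + 20" using ks by linarith
  then have "M < 4 * S + 40" using x0 m_def by linarith
  then show False using \<open>4 * S + 40 < M\<close> by linarith
qed



lemma card_as_sum:
  fixes N :: nat shows "real (card {i. i < N \<and> P i}) = (\<Sum>i<N. if P i then 1 else 0)"
proof -
  have "{i. i < N \<and> P i} = {i\<in>{..<N}. P i}" by auto
  then have "real (card {i. i < N \<and> P i}) = (\<Sum>i\<in>{i\<in>{..<N}. P i}. 1)" by simp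
  also have "\<dots> = (\<Sum>i<N. if P i then 1 else 0)" by (rule sum.inter_filter) simp_all
  finally show ?thesis .
qed

lemma ind_lt:
  fixes y a :: real assumes "0 \<le> y" "y < 1" "0 \<le> a" "a \<le> 1"
  shows "(if y < a then 1 else 0) = frac (y - a) - y + a"
proof (cases "y < a")
  case True
  show ?thesis
  proof (cases "y = 0 \<and> a = 1")
    case True then show ?thesis by simp
  next
    case False
    then have "\<lfloor>y - a\<rfloor> = -1" using True assms by (intro floor_unique) auto
    then show ?thesis using True by (simp add: frac_def)
  qed
next
  case False
  then have "\<lfloor>y - a\<rfloor> = 0" using assms by (intro floor_unique) auto
  then show ?thesis using False by (simp add: frac_def)
qed

lemma ind_le:
  fixes y b :: real assumes "0 \<le> y" "y < 1" "0 \<le> b" "b < 1"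
  shows "(if y \<le> b then 1 else 0) = 1 + b - y - frac (b - y)"
proof (cases "y \<le> b")
  case True
  then have "\<lfloor>b - y\<rfloor> = 0" using assms by (intro floor_unique) auto
  then show ?thesis using True by (simp add: frac_def)
next
  case False
  then have "\<lfloor>b - y\<rfloor> = -1" using assms by (intro floor_unique) auto
  then show ?thesis using False by (simp add: frac_def)
qed

lemma Sk_neg: "Sk (\<lambda>i. - y i) N k = Sk y N k"
proof -
  have "(\<Sum>i<N. cis (2 * pi * real k * - y i)) = cnj (\<Sum>i<N. cis (2 * pi * real k * y i))"
    by (simp add: cis_cnj)
  then show ?thesis unfolding Sk_def by (simp only: complex_mod_cnj)
qed

lemma count_bound:
  assumes N: "N > 0" and y: "\<And>i. i < N \<Longrightarrow> 0 \<le> y i \<and> y i < 1"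
    and ab: "0 \<le> a" "a \<le> b" "b \<le> 1"
  shows "\<bar>real (card {i. i < N \<and> y i \<in> {a..b}}) - real N * (b - a)\<bar>
     \<le> 2 * (4 * (\<Sum>k\<in>{1..<N}. Sk y N k / (pi * real k)) + 40)"
proof -
  define B where "B = 4 * (\<Sum>k\<in>{1..<N}. Sk y N k / (pi * real k)) + 40"
  define C where "C = (\<Sum>i<N. 1/2 - y i)"
  have B1: "\<bar>Pf y N x\<bar> \<le> B" for x unfolding B_def by (rule Pf_sup_bound[OF N])
  have B2: "\<bar>Pf (\<lambda>i. - y i) N x\<bar> \<le> B" for x
    using Pf_sup_bound[OF N, of "\<lambda>i. - y i" x] unfolding B_def Sk_neg .
  have cnt: "real (card {i. i < N \<and> y i \<in> {a..b}}) = (\<Sum>i<N. if y i \<le> b then 1 else 0) - (\<Sum>i<N. if y i < a then 1 else 0)"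
  proof -
    have "(if y i \<in> {a..b} then 1 else 0) = (if y i \<le> b then 1 else 0) - (if y i < a then (1::real) else 0)" for i
      using ab by auto
    then show ?thesis unfolding card_as_sum sum_subtractf[symmetric] by simp
  qed
  have lt: "(\<Sum>i<N. if y i < a' then 1 else 0) - real N * a' = - Pf (\<lambda>i. - y i) N (- a') + C"
    if "0 \<le> a'" "a' \<le> 1" for a'
  proof -
    have "(\<Sum>i<N. if y i < a' then 1 else 0) = (\<Sum>i<N. frac (y i - a') - y i + a')"
      using y that by (intro sum.cong refl ind_lt) auto
    then show ?thesis unfolding Pf_def C_def
      by (simp add: sum_subtractf sum.distrib algebra_simps)
  qed
  have le: "\<bar>(\<Sum>i<N. if y i \<le> b then 1 else 0) - real N * b - C\<bar> \<le> B"
  proof (cases "b < 1")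
    case True
    have "(\<Sum>i<N. if y i \<le> b then 1 else 0) = (\<Sum>i<N. 1 + b - y i - frac (b - y i))"
      using y True ab by (intro sum.cong refl ind_le) auto
    then have "(\<Sum>i<N. if y i \<le> b then 1 else 0) - real N * b - C = Pf y N b"
      unfolding Pf_def C_def by (simp add: sum_subtractf sum.distrib algebra_simps)
    then show ?thesis using B1 by simp
  next
    case False
    then have b1: "b = 1" using ab by simp
    have "(\<Sum>i<N. if y i \<le> b then 1 else 0) = (\<Sum>i<N. if y i < 1 then 1 else (0::real))"
    proof (intro sum.cong refl)
      fix i assume "i \<in> {..<N}"
      then have "y i < 1" using y by auto
      then show "(if y i \<le> b then 1 else 0) = (if y i < 1 then 1 else (0::real))" using b1 by simp
    qed
    then have "(\<Sum>i<N. if y i \<le> b then 1 else 0) - real N * b - C = - Pf (\<lambda>i. - y i) N (- 1)"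
      using lt[of 1] b1 by simp
    then show ?thesis using B2 by simp
  qed
  have "\<bar>Pf (\<lambda>i. - y i) N (- a)\<bar> \<le> B" by (rule B2)
  moreover have "real (card {i. i < N \<and> y i \<in> {a..b}}) - real N * (b - a)
      = ((\<Sum>i<N. if y i \<le> b then 1 else 0) - real N * b - C) + Pf (\<lambda>i. - y i) N (- a)"
    using cnt lt[of a] ab by (simp add: algebra_simps)
  ultimately show ?thesis using le unfolding B_def[symmetric] by linarith
qed



lemma sum_if_inj_pow:
  fixes c :: "nat \<Rightarrow> complex"
  assumes inj: "inj_on v {..<n}" and k: "k > 0"
  shows "(\<Sum>i<n. if v i = j then c i else 0) ^ k = (\<Sum>i<n. if v i = j then c i ^ k else 0)"
proof (cases "\<exists>i0<n. v i0 = j")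
  case True
  then obtain i0 where i0: "i0 < n" "v i0 = j" by blast
  have eq: "(v i = j) = (i = i0)" if "i < n" for i
    using inj i0 that unfolding inj_on_def by auto
  have "(\<Sum>i<n. if v i = j then X i else 0) = X i0" for X :: "nat \<Rightarrow> complex"
  proof -
    have "(\<Sum>i<n. if v i = j then X i else 0) = (\<Sum>i<n. if i = i0 then X i else 0)"
      using eq by (intro sum.cong refl) auto
    also have "\<dots> = X i0" using i0 by (simp add: sum.delta')
    finally show ?thesis .
  qed
  then show ?thesis by simp
next
  case False
  then have "(\<Sum>i<n. if v i = j then X i else 0) = 0" for X :: "nat \<Rightarrow> complex"
    by (intro sum.neutral) auto
  then show ?thesis using k by simp
qed

lemma coeff_hadamard:
  assumes "k > 0" shows "coeff (hadamard_pow g k) j = coeff g j ^ k"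
proof (cases "j \<le> degree g")
  case True
  then show ?thesis unfolding hadamard_pow_def
    by (simp add: nth_default_def del: upt_Suc)
next
  case False
  then have "coeff g j = 0" by (simp add: coeff_eq_0)
  then show ?thesis using False assms unfolding hadamard_pow_def
    by (simp add: nth_default_def del: upt_Suc)
qed

lemma poly_hadamard:
  fixes c :: "nat \<Rightarrow> complex"
  assumes inj: "inj_on v {..<n}" and k: "k > 0"
  shows "poly (hadamard_pow (\<Sum>i<n. monom (c i) (v i)) k) z = (\<Sum>i<n. c i ^ k * z ^ v i)"
proof -
  have "hadamard_pow (\<Sum>i<n. monom (c i) (v i)) k = (\<Sum>i<n. monom (c i ^ k) (v i))"
  proof (rule poly_eqI)
    fix j
    show "coeff (hadamard_pow (\<Sum>i<n. monom (c i) (v i)) k) j = coeff (\<Sum>i<n. monom (c i ^ k) (v i)) j"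
      unfolding coeff_hadamard[OF k] coeff_sum coeff_monom
      using sum_if_inj_pow[OF inj k, of j c] by (simp add: eq_commute)
  qed
  then show ?thesis by (simp add: poly_sum poly_monom)
qed

lemma circ_norm_ge:
  assumes "cmod z = 1" shows "cmod (poly p z) \<le> circ_norm p"
proof -
  have "bounded ((\<lambda>z. cmod (poly p z)) ` sphere 0 1)"
    by (intro compact_imp_bounded compact_continuous_image compact_sphere continuous_intros continuous_on_poly)
  then have "bdd_above ((\<lambda>z. cmod (poly p z)) ` sphere 0 1)" by (rule bounded_imp_bdd_above)
  then show ?thesis unfolding circ_norm_def using assms by (intro cSUP_upper) auto
qed

lemma cis_frac: "cis (2 * pi * real k * frac r) = cis (2 * pi * real k * r)"
proof -
  have "2 * pi * real k * frac r = 2 * pi * real k * r - 2 * pi * (real k * of_int \<lfloor>r\<rfloor>)"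
    by (simp add: frac_def algebra_simps)
  moreover have "cis (2 * pi * (real k * of_int \<lfloor>r\<rfloor>)) = 1"
    by (rule cis_multiple_2pi) simp
  ultimately show ?thesis by (simp add: cis_divide[symmetric])
qed



theorem lemma4p2:
  "\<exists>c::real. c > 0 \<and>
    (\<forall>(n::nat) (v::nat \<Rightarrow> nat) (s::nat \<Rightarrow> real) (t::real).
      inj_on v {..<n} \<longrightarrow> (\<forall>i<n. 0 \<le> s i \<and> s i < 1) \<longrightarrow>
      bias n (\<lambda>i. s i + real (v i) * t)
        \<le> c * (1 + (\<Sum>k=1..n. circ_norm (hadamard_pow
               (\<Sum>i<n. monom (cis (2 * pi * s i)) (v i)) k) / real k)))"
proof (intro exI[of _ 80] conjI allI impI)
  show "(0::real) < 80" by simp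
  fix n :: nat and v :: "nat \<Rightarrow> nat" and s :: "nat \<Rightarrow> real" and t :: real
  assume inj: "inj_on v {..<n}" and srange: "\<forall>i<n. 0 \<le> s i \<and> s i < 1"
  define r where "r i = s i + real (v i) * t" for i
  define y where "y i = frac (r i)" for i
  define f where "f = (\<Sum>i<n. monom (cis (2 * pi * s i)) (v i))"
  define CN where "CN k = circ_norm (hadamard_pow f k)" for k
  define T where "T = (\<Sum>k=1..n. CN k / real k)"
  have SkCN: "Sk y n k \<le> CN k" if k: "k > 0" for k
  proof -
    have "Sk y n k = cmod (\<Sum>i<n. cis (2 * pi * real k * r i))"
      unfolding Sk_def y_def cis_frac ..
    also have "(\<Sum>i<n. cis (2 * pi * real k * r i)) = poly (hadamard_pow f k) (cis (2 * pi * real k * t))"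
      unfolding f_def poly_hadamard[OF inj k]
    proof (intro sum.cong refl)
      fix i
      show "cis (2 * pi * real k * r i) = cis (2 * pi * s i) ^ k * cis (2 * pi * real k * t) ^ v i"
        unfolding Complex.DeMoivre cis_mult r_def by (simp add: algebra_simps)
    qed
    also have "cmod \<dots> \<le> CN k" unfolding CN_def by (rule circ_norm_ge) simp
    finally show ?thesis .
  qed
  have Sk0: "0 \<le> Sk y n k" for k unfolding Sk_def by simp
  have CN0: "0 \<le> CN k" if "k > 0" for k using SkCN[OF that] Sk0[of k] by linarith
  have T0: "0 \<le> T" unfolding T_def
    using CN0 by (intro sum_nonneg divide_nonneg_nonneg) auto
  show "bias n (\<lambda>i. s i + real (v i) * t) \<le> 80 * (1 + (\<Sum>k=1..n. circ_norm (hadamard_pow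
               (\<Sum>i<n. monom (cis (2 * pi * s i)) (v i)) k) / real k))"
    unfolding T_def[unfolded CN_def f_def, symmetric] bias_def
  proof (rule cSUP_least)
    have "(0, 0) \<in> {(a, b). 0 \<le> a \<and> a \<le> b \<and> b \<le> (1::real)}" by simp
    then show "{(a, b). 0 \<le> a \<and> a \<le> b \<and> b \<le> (1::real)} \<noteq> {}" by blast
    fix ab :: "real \<times> real" assume "ab \<in> {(a, b). 0 \<le> a \<and> a \<le> b \<and> b \<le> 1}"
    then obtain a b where ab: "ab = (a, b)" "0 \<le> a" "a \<le> b" "b \<le> 1" by auto
    show "\<bar>real (card {i. i < n \<and> frac (s i + real (v i) * t) \<in> {fst ab..snd ab}}) - real n * (snd ab - fst ab)\<bar> \<le> 80 * (1 + T)"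
    proof (cases "n = 0")
      case True then show ?thesis using T0 by simp
    next
      case False
      then have n: "n > 0" by simp
      define S where "S = (\<Sum>k\<in>{1..<n}. Sk y n k / (pi * real k))"
      have "\<bar>real (card {i. i < n \<and> y i \<in> {a..b}}) - real n * (b - a)\<bar> \<le> 2 * (4 * S + 40)"
        unfolding S_def by (rule count_bound[OF n]) (use ab in \<open>auto simp: y_def frac_lt_1\<close>)
      moreover have "S \<le> T"
      proof -
        have "S \<le> (\<Sum>k\<in>{1..<n}. CN k / real k)" unfolding S_def
        proof (intro sum_mono)
          fix k assume "k \<in> {1..<n}"
          then have k: "k > 0" by simp
          have "Sk y n k / (pi * real k) \<le> Sk y n k / real k"
            using k Sk0[of k] pi_ge_two by (intro divide_left_mono) auto
          also have "\<dots> \<le> CN k / real k" using SkCN[OF k] by (intro divide_right_mono) auto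
          finally show "Sk y n k / (pi * real k) \<le> CN k / real k" .
        qed
        also have "\<dots> \<le> T" unfolding T_def
          using CN0 by (intro sum_mono2) (auto intro!: divide_nonneg_nonneg)
        finally show ?thesis .
      qed
      moreover have "0 \<le> S" unfolding S_def using Sk0 by (intro sum_nonneg divide_nonneg_nonneg) auto
      ultimately show ?thesis using ab T0 unfolding y_def r_def by simp
    qed
  qed
qed

end
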